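(* In the setting of the context (with $B\sim_{\mathbb Q}2\mathcal L$), let $N_{m,j}=\dim W_{m,j}$ and $N_m=\sum_{j=0}^{2m}N_{m,j}$. Let $a_{m,j}=j-m$ if $m<j\le 2m$ and $a_{m,j}=0$ otherwise, and set \[ a_m=\frac{1}{mN_m}\sum_{j=0}^{2m}N_{m,j}a_{m,j}. \] This is the coefficient of $B$ in the fixed part of any $m$-basis type $\mathbb Q$-divisor of $W_{\bullet,\bullet}$. Then \[ \lim_{m\to\infty}a_m=a(n,r):=\frac{r^{n+1}-(r-1)^{n+1}-(n+1)(r-1)^n}{2(n+1)(r^n-(r-1)^n)}. \]
   Context: Work over $\mathbb C$. $V$ is a smooth Fano variety of dimension $n-1\ge1$, $\mathcal L$ is an ample line bundle with $r\mathcal L\sim_{\mathbb Q}-K_V$ ($r>1$ rational), and $B\subset V$ is a smooth effective divisor with $B\sim_{\mathbb Q}2\mathcal L$. $X=\mathbb P_V(\mathcal L\oplus\mathcal O_V)$, with $\mathbb P^1$-bundle projection $\phi:X\to V$. It has two disjoint sections: $V_0$, with normal bundle $\mathcal L^{-1}$, and $V_\infty$, with normal bundle $\mathcal L$. $B_\infty\subset V_\infty$ is the image of $B$, $Y=\mathrm{Bl}_{B_\infty}X$, and $\overline V_\infty\cong V$ is the strict transform of $V_\infty$. For $m\ge1$, $j\ge0$, $W_{m,j}$ is the image of the restriction map $H^0(Y,-mK_Y-j\overline V_\infty)\to H^0(\overline V_\infty,(-mK_Y-j\overline V_\infty)|_{\overline V_\infty})$. Its movable part is $H^0(V,(mr-|m-j|)\mathcal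 L)$ for $0\le j\le 2m$, and $W_{m,j}=0$ for $j>2m$. An $m$-basis type $\mathbb Q$-divisor of $W_{\bullet,\bullet}$ is $\frac{1}{mN_m}\sum_j\Delta_{m,j}$, where each $\Delta_{m,j}$ is the sum of the divisors of a basis of $W_{m,j}$. *)

theory Defs
  imports Complex_Main
begin

text \<open>The geometry (V, L, B, X, Y) is abstracted through the function
  h t = dim H^0(V, t L) for real t \<ge> 0 (the dimension of the space of
  sections of the Q-line bundle t L), which is all the statement depends on:
  N_{m,j} = dim W_{m,j} = h(m r - |m - j|) for 0 \<le> j \<le> 2m and 0 for j > 2m.\<close>

definition Nmj :: "(real \<Rightarrow> nat) \<Rightarrow> real \<Rightarrow> nat \<Rightarrow> nat \<Rightarrow> nat" where
  "Nmj h r m j = (if j \<le> 2 * m then h (real m * r - \<bar>real m - real j\<bar>) else 0)"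

definition Nm :: "(real \<Rightarrow> nat) \<Rightarrow> real \<Rightarrow> nat \<Rightarrow> nat" where
  "Nm h r m = (\<Sum>j = 0..2 * m. Nmj h r m j)"

definition amj :: "nat \<Rightarrow> nat \<Rightarrow> real" where
  "amj m j = (if m < j \<and> j \<le> 2 * m then real j - real m else 0)"

definition am :: "(real \<Rightarrow> nat) \<Rightarrow> real \<Rightarrow> nat \<Rightarrow> real" where
  "am h r m = (1 / (real m * real (Nm h r m))) * (\<Sum>j = 0..2 * m. real (Nmj h r m j) * amj m j)"

definition a_lim :: "nat \<Rightarrow> real \<Rightarrow> real" where
  "a_lim n r = (r ^ (n + 1) - (r - 1) ^ (n + 1) - real (n + 1) * (r - 1) ^ n)
               / (2 * real (n + 1) * (r ^ n - (r - 1) ^ n))"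

end

theory Submission
  imports Defs
begin

lemma step_ineq:
  fixes b :: real and p :: nat
  assumes "b \<ge> 0"
  shows "real (Suc p) * b ^ p \<le> (b+1)^Suc p - b^Suc p"
    and "(b+1)^Suc p - b^Suc p \<le> real (Suc p) * (b+1) ^ p"
proof -
  have eq: "(b+1)^Suc p - b^Suc p = (\<Sum>i<Suc p. b^(Suc p - Suc i) * (b+1)^i)"
    using power_diff_sumr2[of "b+1" "Suc p" b] by simp
  have lo: "\<And>i. i \<in> {..<Suc p} \<Longrightarrow> b ^ p \<le> b^(Suc p - Suc i) * (b+1)^i"
  proof -
    fix i assume "i \<in> {..<Suc p}"
    then have i: "i \<le> p" by simp
    have "b^p = b^(p - i) * b^i" using i by (simp add: power_add[symmetric])
    also have "\<dots> \<le> b^(p-i) * (b+1)^i"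
      by (rule mult_left_mono) (auto intro: power_mono simp: assms)
    finally show "b ^ p \<le> b^(Suc p - Suc i) * (b+1)^i" by simp
  qed
  have hi: "\<And>i. i \<in> {..<Suc p} \<Longrightarrow> b^(Suc p - Suc i) * (b+1)^i \<le> (b+1)^p"
  proof -
    fix i assume "i \<in> {..<Suc p}"
    then have i: "i \<le> p" by simp
    have "b^(p-i) * (b+1)^i \<le> (b+1)^(p-i) * (b+1)^i"
      by (rule mult_right_mono) (auto intro: power_mono simp: assms)
    also have "\<dots> = (b+1)^p" using i by (simp add: power_add[symmetric])
    finally show "b^(Suc p - Suc i) * (b+1)^i \<le> (b+1)^p" by simp
  qed
  show "real (Suc p) * b ^ p \<le> (b+1)^Suc p - b^Suc p"
  proof -
    have "(\<Sum>i<Suc p. b^p) \<le> (\<Sum>i<Suc p. b^(Suc p - Suc i) * (b+1)^i)"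
      by (rule sum_mono[OF lo])
    then show ?thesis unfolding eq by simp
  qed
  show "(b+1)^Suc p - b^Suc p \<le> real (Suc p) * (b+1) ^ p"
  proof -
    have "(\<Sum>i<Suc p. b^(Suc p - Suc i) * (b+1)^i) \<le> (\<Sum>i<Suc p. (b+1)^p)"
      by (rule sum_mono[OF hi])
    then show ?thesis unfolding eq by simp
  qed
qed

lemma powsum_bounds:
  fixes r :: real and m p :: nat
  assumes r: "r \<ge> 1" and m: "m \<ge> 1"
  defines "E \<equiv> (r^Suc p - (r-1)^Suc p) / real (Suc p)"
  shows "E \<le> (\<Sum>i\<le>m. (real m * r - real i)^p) / real m^(Suc p)"
    and "(\<Sum>i\<le>m. (real m * r - real i)^p) / real m^(Suc p) \<le> E + r^p / real m"
proof -
  define a where "a i = real m * r - real i" for i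
  have tel: "(\<Sum>i<m. a i ^ Suc p - a (Suc i) ^ Suc p) = real m ^ Suc p * (r^Suc p - (r-1)^Suc p)"
  proof -
    have "(\<Sum>i<m. a i ^ Suc p - a (Suc i) ^ Suc p) = a 0 ^ Suc p - a m ^ Suc p"
      by (rule sum_lessThan_telescope')
    also have "\<dots> = (real m * r) ^ Suc p - (real m * (r - 1)) ^ Suc p"
      by (simp add: a_def algebra_simps)
    also have "\<dots> = real m ^ Suc p * (r^Suc p - (r-1)^Suc p)"
    proof -
      have "real m * (r - 1) = real m * r - real m" by (simp add: algebra_simps)
      then show ?thesis by (metis power_mult_distrib right_diff_distrib)
    qed
    finally show ?thesis .
  qed
  have ai: "a i = a (Suc i) + 1" for i by (simp add: a_def)
  have nn: "a (Suc i) \<ge> 0" if "i < m" for i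
  proof -
    have "real (Suc i) \<le> real m" using that by simp
    also have "real m \<le> real m * r" using r mult_left_mono[of 1 r "real m"] by simp
    finally show ?thesis by (simp add: a_def)
  qed
  have lo: "real (Suc p) * (\<Sum>i<m. a (Suc i) ^ p) \<le> real m ^ Suc p * (r^Suc p - (r-1)^Suc p)"
    unfolding tel[symmetric] sum_distrib_left
    by (rule sum_mono) (metis ai step_ineq(1) nn lessThan_iff)
  have hi: "real m ^ Suc p * (r^Suc p - (r-1)^Suc p) \<le> real (Suc p) * (\<Sum>i<m. a i ^ p)"
    unfolding tel[symmetric] sum_distrib_left
    by (rule sum_mono) (metis ai step_ineq(2) nn lessThan_iff)
  have S1: "(\<Sum>i\<le>m. a i ^ p) = (\<Sum>i<m. a i ^ p) + a m ^ p"
    by (simp add: lessThan_Suc_atMost[symmetric])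
  have S2: "(\<Sum>i\<le>m. a i ^ p) = a 0 ^ p + (\<Sum>i<m. a (Suc i) ^ p)"
    unfolding lessThan_Suc_atMost[symmetric] by (rule sum.lessThan_Suc_shift)
  have am0: "a m ^ p \<ge> 0" using nn[of "m - 1"] m by simp
  have mpos: "real m ^ Suc p > 0" using m by simp
  have low: "real m ^ Suc p * E \<le> (\<Sum>i\<le>m. a i ^ p)"
  proof -
    have "real m ^ Suc p * E = real m ^ Suc p * (r^Suc p - (r-1)^Suc p) / real (Suc p)"
      unfolding E_def by simp
    also have "\<dots> \<le> (\<Sum>i<m. a i ^ p)"
      using hi by (simp add: divide_le_eq mult.commute del: of_nat_Suc)
    also have "\<dots> \<le> (\<Sum>i\<le>m. a i ^ p)" unfolding S1 using am0 by simp
    finally show ?thesis .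
  qed
  have up: "(\<Sum>i\<le>m. a i ^ p) \<le> real m ^ Suc p * E + (real m * r) ^ p"
  proof -
    have "(\<Sum>i<m. a (Suc i) ^ p) \<le> real m ^ Suc p * (r^Suc p - (r-1)^Suc p) / real (Suc p)"
      using lo by (simp add: le_divide_eq mult.commute del: of_nat_Suc)
    then show ?thesis unfolding S2 E_def by (simp add: a_def)
  qed
  show "E \<le> (\<Sum>i\<le>m. (real m * r - real i)^p) / real m^(Suc p)"
    using low mpos unfolding a_def by (simp add: field_simps)
  have "(real m * r) ^ p / real m ^ Suc p = r^p / real m"
    using m by (simp add: power_mult_distrib)
  then show "(\<Sum>i\<le>m. (real m * r - real i)^p) / real m^(Suc p) \<le> E + r^p / real m"
    using up mpos m unfolding a_def by (simp add: field_simps)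
qed

lemma powsum_lim:
  fixes r :: real and p :: nat
  assumes r: "r \<ge> 1"
  shows "(\<lambda>m. (\<Sum>i\<le>m. (real m * r - real i)^p) / real m^(Suc p))
           \<longlonglongrightarrow> (r^Suc p - (r-1)^Suc p) / real (Suc p)"
proof (rule tendsto_sandwich)
  let ?E = "(r^Suc p - (r-1)^Suc p) / real (Suc p)"
  show "\<forall>\<^sub>F m in sequentially. ?E \<le> (\<Sum>i\<le>m. (real m * r - real i)^p) / real m^(Suc p)"
    using eventually_ge_at_top[of "1::nat"] by eventually_elim (rule powsum_bounds(1)[OF r])
  show "\<forall>\<^sub>F m in sequentially. (\<Sum>i\<le>m. (real m * r - real i)^p) / real m^(Suc p) \<le> ?E + r^p / real m"
    using eventually_ge_at_top[of "1::nat"] by eventually_elim (rule powsum_bounds(2)[OF r])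
  show "(\<lambda>m. ?E) \<longlonglongrightarrow> ?E" by simp
  have "(\<lambda>m. ?E + r^p / real m) \<longlonglongrightarrow> ?E + 0"
    by (intro tendsto_add tendsto_const lim_const_over_n)
  then show "(\<lambda>m. ?E + r^p / real m) \<longlonglongrightarrow> ?E" by simp
qed

lemma sym_sum:
  fixes f :: "real \<Rightarrow> real" and m :: nat
  shows "(\<Sum>j=0..2*m. f \<bar>real m - real j\<bar>) = 2 * (\<Sum>i\<le>m. f (real i)) - f 0"
proof -
  have "(\<Sum>j=0..2*m. f \<bar>real m - real j\<bar>) = (\<Sum>j=0..m+m. f \<bar>real m - real j\<bar>)"
    by (simp add: mult_2)
  also have "\<dots> = (\<Sum>j=0..m. f \<bar>real m - real j\<bar>) + (\<Sum>j=m+1..m+m. f \<bar>real m - real j\<bar>)"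
    by (rule sum.ub_add_nat) simp
  also have "(\<Sum>j=0..m. f \<bar>real m - real j\<bar>) = (\<Sum>j=0..m. f \<bar>real m - real (m + 0 - j)\<bar>)"
    by (rule sum.atLeastAtMost_rev)
  also have "\<dots> = (\<Sum>i\<le>m. f (real i))"
    unfolding atLeast0AtMost by (rule sum.cong) (auto simp: of_nat_diff)
  also have "(\<Sum>j=m+1..m+m. f \<bar>real m - real j\<bar>) = (\<Sum>j=1+m..m+m. f \<bar>real m - real j\<bar>)"
    by (simp add: add.commute)
  also have "\<dots> = (\<Sum>i=1..m. f \<bar>real m - real (i + m)\<bar>)"
    by (rule sum.shift_bounds_cl_nat_ivl)
  also have "\<dots> = (\<Sum>i=1..m. f (real i))"
    by (rule sum.cong) auto
  also have "(\<Sum>i=1..m. f (real i)) = (\<Sum>i\<le>m. f (real i)) - f 0"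
  proof -
    have "(\<Sum>i=0..m. f (real i)) = f (real 0) + (\<Sum>i=Suc 0..m. f (real i))"
      by (rule sum.atLeast_Suc_atMost) simp
    then show ?thesis by (simp add: atLeast0AtMost)
  qed
  finally show ?thesis by simp
qed

lemma amj_sum:
  fixes f :: "real \<Rightarrow> real" and m :: nat
  shows "(\<Sum>j=0..2*m. f \<bar>real m - real j\<bar> * amj m j) = (\<Sum>i\<le>m. f (real i) * real i)"
proof -
  have "(\<Sum>j=0..2*m. f \<bar>real m - real j\<bar> * amj m j) = (\<Sum>j=0..m+m. f \<bar>real m - real j\<bar> * amj m j)"
    by (simp add: mult_2)
  also have "\<dots> = (\<Sum>j=0..m. f \<bar>real m - real j\<bar> * amj m j) + (\<Sum>j=m+1..m+m. f \<bar>real m - real j\<bar> * amj m j)"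
    by (rule sum.ub_add_nat) simp
  also have "(\<Sum>j=0..m. f \<bar>real m - real j\<bar> * amj m j) = 0"
    by (rule sum.neutral) (auto simp: amj_def)
  also have "(\<Sum>j=m+1..m+m. f \<bar>real m - real j\<bar> * amj m j) = (\<Sum>j=1+m..m+m. f \<bar>real m - real j\<bar> * amj m j)"
    by (simp add: add.commute)
  also have "\<dots> = (\<Sum>i=1..m. f \<bar>real m - real (i + m)\<bar> * amj m (i + m))"
    by (rule sum.shift_bounds_cl_nat_ivl)
  also have "\<dots> = (\<Sum>i=1..m. f (real i) * real i)"
    by (rule sum.cong) (auto simp: amj_def)
  also have "(\<Sum>i=1..m. f (real i) * real i) = (\<Sum>i\<le>m. f (real i) * real i)"
  proof -
    have "(\<Sum>i=0..m. f (real i) * real i) = f (real 0) * real 0 + (\<Sum>i=Suc 0..m. f (real i) * real i)"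
      by (rule sum.atLeast_Suc_atMost) simp
    then show ?thesis by (simp add: atLeast0AtMost)
  qed
  finally show ?thesis by simp
qed

lemma approx:
  fixes h :: "real \<Rightarrow> nat" and r c L :: real and k q :: nat and w :: "nat \<Rightarrow> nat \<Rightarrow> real"
  assumes lim: "((\<lambda>t. real (h t) / t ^ k) \<longlongrightarrow> c) at_top" and r: "r > 1"
    and w: "\<And>m j. w m j \<ge> 0"
    and P: "(\<lambda>m. (\<Sum>j=0..2*m. (real m * r - \<bar>real m - real j\<bar>)^k * w m j) / real m^q) \<longlonglongrightarrow> L"
  shows "(\<lambda>m. (\<Sum>j=0..2*m. real (Nmj h r m j) * w m j) / real m^q) \<longlonglongrightarrow> c * L"
proof -
  define Pm where "Pm m = (\<Sum>j=0..2*m. (real m * r - \<bar>real m - real j\<bar>)^k * w m j) / real m^q" for m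
  define Qm where "Qm m = (\<Sum>j=0..2*m. real (Nmj h r m j) * w m j) / real m^q" for m
  have D: "(\<lambda>m. Qm m - c * Pm m) \<longlonglongrightarrow> 0"
  proof (rule LIMSEQ_I)
    fix e :: real assume e: "e > 0"
    define eps where "eps = e / (\<bar>L\<bar> + 1)"
    have eps: "eps > 0" using e by (simp add: eps_def)
    from lim[THEN tendstoD, OF eps] obtain T where T: "\<And>t. t \<ge> T \<Longrightarrow> dist (real (h t) / t ^ k) c < eps"
      unfolding eventually_at_top_linorder by blast
    from P[unfolded Pm_def[symmetric], THEN tendstoD, of 1]
    obtain M1 where M1: "\<And>m. m \<ge> M1 \<Longrightarrow> dist (Pm m) L < 1"
      unfolding eventually_sequentially by auto
    have "\<forall>\<^sub>F m in sequentially. real m \<ge> max T 1 / (r - 1)"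
      using filterlim_real_sequentially unfolding filterlim_at_top by blast
    then obtain M2 where M2: "\<And>m. m \<ge> M2 \<Longrightarrow> real m \<ge> max T 1 / (r - 1)"
      unfolding eventually_sequentially by auto
    show "\<exists>no. \<forall>m\<ge>no. norm (Qm m - c * Pm m - 0) < e"
    proof (intro exI allI impI)
      fix m assume m: "m \<ge> max M1 M2"
      have mT: "real m * (r - 1) \<ge> max T 1"
        using M2[of m] m r by (simp add: divide_le_eq mult.commute)
      have Pb: "\<bar>Pm m\<bar> < \<bar>L\<bar> + 1" using M1[of m] m by (simp add: dist_real_def)
      have mpos: "real m > 0" using mT r by (cases "m = 0") auto
      have each: "\<bar>real (Nmj h r m j) * w m j - c * ((real m * r - \<bar>real m - real j\<bar>)^k * w m j)\<bar>
                 \<le> eps * ((real m * r - \<bar>real m - real j\<bar>)^k * w m j)" if j: "j \<in> {0..2*m}" for j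
      proof -
        define t where "t = real m * r - \<bar>real m - real j\<bar>"
        have "\<bar>real m - real j\<bar> \<le> real m" using j by auto
        then have tge: "t \<ge> real m * (r - 1)" by (simp add: t_def algebra_simps)
        then have tT: "t \<ge> T" and tpos: "t > 0" using mT by auto
        have N: "real (Nmj h r m j) = real (h t)" using j by (simp add: Nmj_def t_def)
        have tk: "t ^ k > 0" using tpos by simp
        have "\<bar>real (h t) / t ^ k - c\<bar> < eps" using T[OF tT] by (simp add: dist_real_def)
        moreover have "\<bar>real (h t) - c * t^k\<bar> = \<bar>real (h t) / t ^ k - c\<bar> * t^k"
        proof -
          have "(real (h t) / t ^ k - c) * t^k = real (h t) - c * t^k" using tpos
            using tk by (simp add: left_diff_distrib)
          then show ?thesis using tk by (metis abs_mult abs_of_pos)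
        qed
        ultimately have "\<bar>real (h t) - c * t^k\<bar> < eps * t^k"
          using tk by (simp add: mult_strict_right_mono)
        then have "\<bar>real (h t) - c * t^k\<bar> * w m j \<le> eps * t^k * w m j"
          using w[of m j] by (intro mult_right_mono) auto
        then show ?thesis
          unfolding N t_def[symmetric] using w[of m j]
        proof -
          have "real (h t) * w m j - c * (t ^ k * w m j) = (real (h t) - c * t^k) * w m j"
            by (simp add: algebra_simps)
          then show "\<bar>real (h t) * w m j - c * (t ^ k * w m j)\<bar> \<le> eps * (t ^ k * w m j)"
            using \<open>\<bar>real (h t) - c * t^k\<bar> * w m j \<le> eps * t^k * w m j\<close> w[of m j]
            by (simp add: abs_mult mult.assoc)
        qed
      qed
      have "\<bar>(\<Sum>j=0..2*m. real (Nmj h r m j) * w m j) - c * (\<Sum>j=0..2*m. (real m * r - \<bar>real m - real j\<bar>)^k * w m j)\<bar>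
            \<le> (\<Sum>j=0..2*m. eps * ((real m * r - \<bar>real m - real j\<bar>)^k * w m j))"
        unfolding sum_distrib_left sum_subtractf[symmetric]
        by (rule order_trans[OF sum_abs sum_mono]) (rule each)
      then have "\<bar>Qm m - c * Pm m\<bar> \<le> eps * Pm m"
        using mpos unfolding Qm_def Pm_def sum_distrib_left[symmetric]
        by (simp add: diff_divide_distrib[symmetric] abs_divide divide_right_mono)
      also have "\<dots> \<le> eps * \<bar>Pm m\<bar>" using eps by (intro mult_left_mono) auto
      also have "\<dots> < eps * (\<bar>L\<bar> + 1)" using eps Pb by simp
      also have "\<dots> = e" by (simp add: eps_def)
      finally show "norm (Qm m - c * Pm m - 0) < e" by simp
    qed
  qed
  have "(\<lambda>m. (Qm m - c * Pm m) + c * Pm m) \<longlonglongrightarrow> 0 + c * L"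
    by (intro tendsto_add D tendsto_mult tendsto_const) (use P in \<open>simp add: Pm_def\<close>)
  then show ?thesis by (simp add: Qm_def)
qed

theorem mainTheorem9:
  fixes h :: "real \<Rightarrow> nat" and n :: nat and r c :: real
  assumes "n \<ge> 2"
    and "r \<in> \<rat>" and "r > 1"
    and "c > 0"
    and "((\<lambda>t. real (h t) / t ^ (n - 1)) \<longlongrightarrow> c) at_top"
  shows "(\<lambda>m. am h r m) \<longlonglongrightarrow> a_lim n r"
proof -
  obtain k where nk: "n = Suc k" using assms(1) by (cases n) auto
  have r: "r > 1" and r1: "r \<ge> 1" using assms(3) by auto
  have lim: "((\<lambda>t. real (h t) / t ^ k) \<longlongrightarrow> c) at_top" using assms(5) nk by simp
  define E where "E p = (r^Suc p - (r-1)^Suc p) / real (Suc p)" for p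
  define S where "S p m = (\<Sum>i\<le>m. (real m * r - real i)^p) / real m^(Suc p)" for p m
  have SL: "S p \<longlonglongrightarrow> E p" for p
    unfolding S_def E_def by (rule powsum_lim[OF r1])
  have A: "(\<lambda>m. (\<Sum>j=0..2*m. (real m * r - \<bar>real m - real j\<bar>)^k * 1) / real m^(Suc k)) \<longlonglongrightarrow> 2 * E k"
  proof -
    have "(\<lambda>m. 2 * S k m - r^k / real m) \<longlonglongrightarrow> 2 * E k - 0"
      by (intro tendsto_diff tendsto_mult tendsto_const SL lim_const_over_n)
    moreover have "\<forall>\<^sub>F m in sequentially. 2 * S k m - r^k / real m
        = (\<Sum>j=0..2*m. (real m * r - \<bar>real m - real j\<bar>)^k * 1) / real m^(Suc k)"
      using eventually_ge_at_top[of "1::nat"]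
    proof eventually_elim
      case (elim m)
      have "(\<Sum>j=0..2*m. (real m * r - \<bar>real m - real j\<bar>)^k * 1)
          = 2 * (\<Sum>i\<le>m. (real m * r - real i)^k) - (real m * r)^k"
        using sym_sum[of "\<lambda>x. (real m * r - x)^k" m] by simp
      moreover have "(real m * r)^k / real m^(Suc k) = r^k / real m"
        using elim by (simp add: power_mult_distrib)
      ultimately show ?case unfolding S_def by (simp add: diff_divide_distrib)
    qed
    ultimately show ?thesis by (simp add: Lim_transform_eventually)
  qed
  have B: "(\<lambda>m. (\<Sum>j=0..2*m. (real m * r - \<bar>real m - real j\<bar>)^k * amj m j) / real m^(Suc (Suc k)))
             \<longlonglongrightarrow> r * E k - E (Suc k)"
  proof -
    have "(\<lambda>m. r * S k m - S (Suc k) m) \<longlonglongrightarrow> r * E k - E (Suc k)"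
      by (intro tendsto_diff tendsto_mult tendsto_const SL)
    moreover have "\<forall>\<^sub>F m in sequentially. r * S k m - S (Suc k) m
        = (\<Sum>j=0..2*m. (real m * r - \<bar>real m - real j\<bar>)^k * amj m j) / real m^(Suc (Suc k))"
      using eventually_ge_at_top[of "1::nat"]
    proof eventually_elim
      case (elim m)
      have mpos: "real m > 0" using elim by simp
      have "(\<Sum>j=0..2*m. (real m * r - \<bar>real m - real j\<bar>)^k * amj m j)
          = (\<Sum>i\<le>m. (real m * r - real i)^k * real i)"
        using amj_sum[of "\<lambda>x. (real m * r - x)^k" m] by simp
      also have "\<dots> = (\<Sum>i\<le>m. real m * r * (real m * r - real i)^k - (real m * r - real i)^Suc k)"
        by (rule sum.cong) (simp_all add: algebra_simps)
      also have "\<dots> = real m * r * (\<Sum>i\<le>m. (real m * r - real i)^k) - (\<Sum>i\<le>m. (real m * r - real i)^Suc k)"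
        by (simp add: sum_subtractf sum_distrib_left)
      finally have eq: "(\<Sum>j=0..2*m. (real m * r - \<bar>real m - real j\<bar>)^k * amj m j)
          = real m * r * (\<Sum>i\<le>m. (real m * r - real i)^k) - (\<Sum>i\<le>m. (real m * r - real i)^Suc k)" .
      show ?case unfolding eq S_def using mpos
        by (simp add: diff_divide_distrib)
    qed
    ultimately show ?thesis by (simp add: Lim_transform_eventually)
  qed
  have Q0: "(\<lambda>m. (\<Sum>j=0..2*m. real (Nmj h r m j) * 1) / real m^(Suc k)) \<longlonglongrightarrow> c * (2 * E k)"
    by (rule approx[OF lim r _ A]) simp
  have amj_nn: "amj m j \<ge> 0" for m j by (simp add: amj_def)
  have Q1: "(\<lambda>m. (\<Sum>j=0..2*m. real (Nmj h r m j) * amj m j) / real m^(Suc (Suc k))) \<longlonglongrightarrow> c * (r * E k - E (Suc k))"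
    by (rule approx[OF lim r amj_nn B])
  have Ekpos: "E k > 0"
  proof -
    have "(r-1)^Suc k < r^Suc k" using r by (intro power_strict_mono) auto
    then show ?thesis by (simp add: E_def)
  qed
  have "(\<lambda>m. (\<Sum>j=0..2*m. real (Nmj h r m j) * amj m j) / real m^(Suc (Suc k))
            / ((\<Sum>j=0..2*m. real (Nmj h r m j) * 1) / real m^(Suc k)))
          \<longlonglongrightarrow> c * (r * E k - E (Suc k)) / (c * (2 * E k))"
    using Q0 Q1 Ekpos assms(4) by (intro tendsto_divide) auto
  moreover have "\<forall>\<^sub>F m in sequentially. (\<Sum>j=0..2*m. real (Nmj h r m j) * amj m j) / real m^(Suc (Suc k))
            / ((\<Sum>j=0..2*m. real (Nmj h r m j) * 1) / real m^(Suc k)) = am h r m"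
    using eventually_ge_at_top[of "1::nat"]
  proof eventually_elim
    case (elim m)
    have mpos: "real m > 0" using elim by simp
    have NN: "real (Nm h r m) = (\<Sum>j=0..2*m. real (Nmj h r m j) * 1)"
      by (simp add: Nm_def)
    show ?case
    proof (cases "real (Nm h r m) = 0")
      case True
      then show ?thesis unfolding am_def using NN by simp
    next
      case False
      then show ?thesis unfolding am_def NN[symmetric] using mpos by (simp add: field_simps)
    qed
  qed
  moreover have "c * (r * E k - E (Suc k)) / (c * (2 * E k)) = a_lim n r"
  proof -
    define X where "X = r ^ Suc k"
    define Y where "Y = (r - 1) ^ Suc k"
    have Ek: "E k = (X - Y) / real (Suc k)" by (simp only: E_def X_def Y_def)
    have XY: "X - Y \<noteq> 0" using Ekpos unfolding Ek by (auto simp: zero_less_divide_iff)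
    have ESk: "E (Suc k) = (r * X - (r - 1) * Y) / real (Suc (Suc k))" by (simp add: E_def X_def Y_def)
    have al: "a_lim n r = (r * X - (r - 1) * Y - real (Suc (Suc k)) * Y) / (2 * real (Suc (Suc k)) * (X - Y))"
      by (simp add: a_lim_def nk X_def Y_def)
    define K where "K = real k"
    have K: "K \<ge> 0" by (simp add: K_def)
    have num: "r * E k - E (Suc k) = (r * X - (r - 1) * Y - (K + 2) * Y) / ((K + 1) * (K + 2))"
      unfolding Ek ESk using K by (simp add: K_def field_simps)
    have den: "2 * E k = 2 * (X - Y) / (K + 1)" unfolding Ek by (simp add: K_def)
    have "c * (r * E k - E (Suc k)) / (c * (2 * E k)) = (r * E k - E (Suc k)) / (2 * E k)"
      using assms(4) by simp
    also have "\<dots> = (r * X - (r - 1) * Y - (K + 2) * Y) / (2 * (K + 2) * (X - Y))"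
    proof -
      have k1: "K + 1 \<noteq> 0" and k2: "K + 2 \<noteq> 0" using K by auto
      define A where "A = r * X - (r - 1) * Y - (K + 2) * Y"
      define D where "D = X - Y"
      have D: "D \<noteq> 0" using XY by (simp add: D_def)
      have "A / ((K + 1) * (K + 2)) / (2 * D / (K + 1)) = A / (2 * (K + 2) * D)"
        using k1 k2 D by (simp add: divide_simps)
      then show ?thesis unfolding num den A_def D_def .
    qed
    also have "\<dots> = a_lim n r" unfolding al by (simp add: K_def add.commute)
    finally show ?thesis .
  qed
  ultimately show ?thesis by (simp add: Lim_transform_eventually)
qed

end
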